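(* Assume the KKT set $\Omega^*$ is nonempty and fix an initial point $\omega_0=(X^{(0)},Y^{(0)},V^{(0)})$. Then there exist parameters $(\alpha_k,\beta_k)\in\mathcal{S}$, $k\ge0$, such that the sequence $\{\omega_k\}$ generated by the re-parameterized LADMM iteration (defined in the context) converges to a KKT point of $\min_{X,Y}F(X)+G(Y)$ subject to $X=Y$.
   Context: $F,G:\mathbb{R}^{p\times p}\to\mathbb{R}\cup\{+\infty\}$ are proper, closed, convex. A KKT point is $\omega^*=(X^*,Y^*,V^* )$ with $X^*=Y^*$, $-V^*\in\partial F(X^* )$, $V^*\in\partial G(Y^* )$; $\Omega^*$ is the set of KKT points. $\circ$ is the entrywise (Hadamard) product; for a matrix $a$ with positive entries, $1/a$ and $\sqrt{a}$ are entrywise. $\mathcal{S}:=\{(\alpha,\beta)\in\mathbb{R}^{p\times p}\times\mathbb{R}^{p\times p}: 0<\alpha_{ij}<\beta_{ij}\ \forall i,j\}$. Writing $\omega_k=(X^{(k)},Y^{(k)},V^{(k)})$, the re-parameterized LADMM iteration with parameters $(\alpha_k,\beta_k)$ is \[ \begin{aligned} X^{(k+1)} &= \arg\min_X\Big\{F(X)+\tfrac12\Big\|\tfrac{1}{\sqrt{\alpha_k}}\circ\Big(X - X^{(k)} + \alpha_k\circ\big(V^{(k)}+\tfrac{1}{\beta_k}\circ(X^{(k)}-Y^{(k)})\big)\Big)\Big\|_F^2\Big\},\\ Y^{(k+1)} &= \arg\min_Y\Big\{G(Y)+\tfrac12\Big\|\tfrac{1}{\sqrt{\beta_k}}\circ\big(Y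 - X^{(k+1)} - \beta_k\circ V^{(k)}\big)\Big\|_F^2\Big\},\\ V^{(k+1)} &= V^{(k)} + \tfrac{1}{\beta_k}\circ\big(X^{(k+1)} - Y^{(k+1)}\big). \end{aligned} \] Convergence of triples is in the norm $\|\omega\|_F^2=\|X\|_F^2+\|Y\|_F^2+\|V\|_F^2$. *)

theory Defs
  imports "HOL-Analysis.Analysis" "HOL-Library.Extended_Real"
begin

text \<open>p x p real matrices are rendered as real^'n^'n (p = CARD('n)).
  The norm on this type is the Frobenius norm and the inner product is the
  Frobenius inner product.\<close>

type_synonym ('n) mat = "real ^ ('n::finite) ^ 'n"

definition hprod :: "('n::finite) mat \<Rightarrow> ('n::finite) mat \<Rightarrow> ('n::finite) mat" (infixl "\<circ>\<^sub>H" 70) where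
  "a \<circ>\<^sub>H b = (\<chi> i j. a $ i $ j * b $ i $ j)"

definition hinv :: "('n::finite) mat \<Rightarrow> ('n::finite) mat" where
  "hinv a = (\<chi> i j. 1 / a $ i $ j)"

definition hsqrt :: "('n::finite) mat \<Rightarrow> ('n::finite) mat" where
  "hsqrt a = (\<chi> i j. sqrt (a $ i $ j))"

definition proper_fun :: "('a \<Rightarrow> ereal) \<Rightarrow> bool" where
  "proper_fun f \<longleftrightarrow> (\<forall>x. f x \<noteq> -\<infinity>) \<and> (\<exists>x. f x \<noteq> \<infinity>)"

definition epigraph_e :: "('a \<Rightarrow> ereal) \<Rightarrow> ('a \<times> real) set" where
  "epigraph_e f = {(x, t). f x \<le> ereal t}"

definition closed_fun :: "('a::topological_space \<Rightarrow> ereal) \<Rightarrow> bool" where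
  "closed_fun f \<longleftrightarrow> closed (epigraph_e f)"

definition convex_fun :: "('a::real_vector \<Rightarrow> ereal) \<Rightarrow> bool" where
  "convex_fun f \<longleftrightarrow> convex (epigraph_e f)"

definition subdiff :: "('a::real_inner \<Rightarrow> ereal) \<Rightarrow> 'a \<Rightarrow> 'a set" where
  "subdiff f x = {v. \<bar>f x\<bar> \<noteq> \<infinity> \<and> (\<forall>z. f z \<ge> f x + ereal (inner v (z - x)))}"

definition KKT_set :: "(('n::finite) mat \<Rightarrow> ereal) \<Rightarrow> (('n::finite) mat \<Rightarrow> ereal) \<Rightarrow> (('n::finite) mat \<times> ('n::finite) mat \<times> ('n::finite) mat) set" where
  "KKT_set F G = {(X, Y, V). X = Y \<and> - V \<in> subdiff F X \<and> V \<in> subdiff G Y}"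

definition param_set :: "(('n::finite) mat \<times> ('n::finite) mat) set" where
  "param_set = {(a, b). \<forall>i j. 0 < a $ i $ j \<and> a $ i $ j < b $ i $ j}"

definition X_obj :: "(('n::finite) mat \<Rightarrow> ereal) \<Rightarrow> ('n::finite) mat \<Rightarrow> ('n::finite) mat \<Rightarrow> ('n::finite) mat \<times> ('n::finite) mat \<times> ('n::finite) mat \<Rightarrow> ('n::finite) mat \<Rightarrow> ereal" where
  "X_obj F a b w X = (case w of (Xk, Yk, Vk) \<Rightarrow>
     F X + ereal (1/2 * (norm (hinv (hsqrt a) \<circ>\<^sub>H (X - Xk + a \<circ>\<^sub>H (Vk + hinv b \<circ>\<^sub>H (Xk - Yk)))))\<^sup>2))"

definition Y_obj :: "(('n::finite) mat \<Rightarrow> ereal) \<Rightarrow> ('n::finite) mat \<Rightarrow> ('n::finite) mat \<Rightarrow> ('n::finite) mat \<Rightarrow> ('n::finite) mat \<Rightarrow> ereal" where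
  "Y_obj G b Xn Vk Y = G Y + ereal (1/2 * (norm (hinv (hsqrt b) \<circ>\<^sub>H (Y - Xn - b \<circ>\<^sub>H Vk)))\<^sup>2)"

text \<open>One step of the re-parameterized LADMM (argmin expressed as "is a minimizer";
  the minimizers are unique since the objectives are strongly convex).\<close>

definition LADMM_step :: "(('n::finite) mat \<Rightarrow> ereal) \<Rightarrow> (('n::finite) mat \<Rightarrow> ereal) \<Rightarrow> ('n::finite) mat \<Rightarrow> ('n::finite) mat
    \<Rightarrow> ('n::finite) mat \<times> ('n::finite) mat \<times> ('n::finite) mat \<Rightarrow> ('n::finite) mat \<times> ('n::finite) mat \<times> ('n::finite) mat \<Rightarrow> bool" where
  "LADMM_step F G a b w w' = (case w of (Xk, Yk, Vk) \<Rightarrow> case w' of (Xn, Yn, Vn) \<Rightarrow>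
      (\<forall>Z. X_obj F a b w Xn \<le> X_obj F a b w Z) \<and>
      (\<forall>Z. Y_obj G b Xn Vk Yn \<le> Y_obj G b Xn Vk Z) \<and>
      Vn = Vk + hinv b \<circ>\<^sub>H (Xn - Yn))"

definition LADMM_seq :: "(('n::finite) mat \<Rightarrow> ereal) \<Rightarrow> (('n::finite) mat \<Rightarrow> ereal) \<Rightarrow> (nat \<Rightarrow> ('n::finite) mat) \<Rightarrow> (nat \<Rightarrow> ('n::finite) mat)
    \<Rightarrow> ('n::finite) mat \<times> ('n::finite) mat \<times> ('n::finite) mat \<Rightarrow> (nat \<Rightarrow> ('n::finite) mat \<times> ('n::finite) mat \<times> ('n::finite) mat) \<Rightarrow> bool" where
  "LADMM_seq F G \<alpha> \<beta> w0 \<omega> \<longleftrightarrow> \<omega> 0 = w0 \<and> (\<forall>k. LADMM_step F G (\<alpha> k) (\<beta> k) (\<omega> k) (\<omega> (Suc k)))"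

end

theory Submission
  imports Defs
begin

lemma epi_lim:
  fixes f :: "'a::topological_space \<Rightarrow> ereal"
  assumes cl: "closed_fun f"
    and lim: "((\<lambda>k. (xs k, ts k)) \<longlongrightarrow> (x, t)) sequentially"
    and ev: "eventually (\<lambda>k. f (xs k) \<le> ereal (ts k)) sequentially"
  shows "f x \<le> ereal t"
proof -
  have "(x, t) \<in> epigraph_e f"
    apply (rule Lim_in_closed_set[OF cl[unfolded closed_fun_def] _ _ lim])
    using ev by (auto simp: epigraph_e_def)
  then show ?thesis by (simp add: epigraph_e_def)
qed

lemma convex_ineq:
  fixes f :: "'a::real_vector \<Rightarrow> ereal"
  assumes cv: "convex_fun f" and fx: "f x = ereal a" and fz: "f z = ereal b"
    and t: "0 \<le> t" "t \<le> 1"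
  shows "f ((1 - t) *\<^sub>R x + t *\<^sub>R z) \<le> ereal ((1 - t) * a + t * b)"
proof -
  have "(x, a) \<in> epigraph_e f" "(z, b) \<in> epigraph_e f" using fx fz by (auto simp: epigraph_e_def)
  then have "(1 - t) *\<^sub>R (x, a) + t *\<^sub>R (z, b) \<in> epigraph_e f"
    using cv[unfolded convex_fun_def] t by (intro convexD) auto
  then show ?thesis by (simp add: epigraph_e_def)
qed

lemma proper_fin:
  assumes "proper_fun f" "f x \<noteq> \<infinity>"
  obtains a where "f x = ereal a"
  using assms unfolding proper_fun_def by (cases "f x") auto

lemma subdiff_fin:
  assumes "p \<in> subdiff f x"
  obtains a where "f x = ereal a" "\<And>z. f z \<ge> ereal a + ereal (inner p (z - x))"
proof -
  have h: "\<bar>f x\<bar> \<noteq> \<infinity>" "\<And>z. f z \<ge> f x + ereal (inner p (z - x))"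
    using assms unfolding subdiff_def by auto
  from h(1) obtain a where a: "f x = ereal a" by (cases "f x") auto
  have b: "\<And>z. f z \<ge> ereal a + ereal (inner p (z - x))" using h(2) a by simp
  show thesis by (rule that[OF a b])
qed

lemma subdiff_mono:
  assumes "p \<in> subdiff f x" "q \<in> subdiff f y"
  shows "inner (p - q) (x - y) \<ge> 0"
proof -
  obtain a where a: "f x = ereal a" "\<And>z. f z \<ge> ereal a + ereal (inner p (z - x))"
    using subdiff_fin[OF assms(1)] by blast
  obtain b where b: "f y = ereal b" "\<And>z. f z \<ge> ereal b + ereal (inner q (z - y))"
    using subdiff_fin[OF assms(2)] by blast
  have "b \<ge> a + inner p (y - x)" using a(2)[of y] b(1) by simp
  moreover have "a \<ge> b + inner q (x - y)" using b(2)[of x] a(1) by simp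
  moreover have "inner p (y - x) = - inner p (x - y)"
    by (simp add: inner_diff_right)
  ultimately show ?thesis by (simp add: inner_diff_left)
qed

lemma subdiff_closed:
  fixes f :: "'a::real_inner \<Rightarrow> ereal"
  assumes pr: "proper_fun f" and cl: "closed_fun f"
    and xs: "xs \<longlonglongrightarrow> x" and gs: "gs \<longlonglongrightarrow> g"
    and ev: "eventually (\<lambda>k. gs k \<in> subdiff f (xs k)) sequentially"
  shows "g \<in> subdiff f x"
proof -
  have key: "f x \<le> ereal (b - inner g (z - x))" if fz: "f z = ereal b" for z b
  proof (rule epi_lim[OF cl])
    show "((\<lambda>k. (xs k, b - inner (gs k) (z - xs k))) \<longlongrightarrow> (x, b - inner g (z - x))) sequentially"
      by (intro tendsto_Pair xs tendsto_diff[OF tendsto_const] tendsto_inner gs tendsto_diff[OF tendsto_const] xs)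
    show "eventually (\<lambda>k. f (xs k) \<le> ereal (b - inner (gs k) (z - xs k))) sequentially"
      using ev
    proof eventually_elim
      case (elim k)
      obtain a where a: "f (xs k) = ereal a" "\<And>z. f z \<ge> ereal a + ereal (inner (gs k) (z - xs k))"
        using subdiff_fin[OF elim] by blast
      have "b \<ge> a + inner (gs k) (z - xs k)" using a(2)[of z] fz by simp
      then show ?case using a(1) by simp
    qed
  qed
  obtain z0 where z0: "f z0 \<noteq> \<infinity>" using pr unfolding proper_fun_def by auto
  have nm: "f x \<noteq> -\<infinity>" using pr unfolding proper_fun_def by auto
  obtain b0 where b0: "f z0 = ereal b0" using z0 pr unfolding proper_fun_def by (cases "f z0") auto
  have "f x \<noteq> \<infinity>" using key[OF b0] by auto
  then obtain a where a: "f x = ereal a" using nm by (cases "f x") auto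
  have "f z \<ge> ereal a + ereal (inner g (z - x))" for z
  proof (cases "f z")
    case (real b)
    then show ?thesis using key[OF real] a by simp
  next
    case PInf
    then show ?thesis by simp
  next
    case MInf
    then show ?thesis using pr unfolding proper_fun_def by auto
  qed
  then show ?thesis using a unfolding subdiff_def by simp
qed

lemma ball_lower:
  fixes f :: "'a::euclidean_space \<Rightarrow> ereal"
  assumes pr: "proper_fun f" and cl: "closed_fun f"
  shows "\<exists>m. \<forall>z\<in>cball x0 1. ereal m \<le> f z"
proof (rule ccontr)
  assume "\<not> ?thesis"
  then have "\<forall>k::nat. \<exists>z\<in>cball x0 1. f z < ereal (- real k)"
    by (meson not_le)
  then obtain zs where zs: "\<And>k. zs k \<in> cball x0 1" "\<And>k. f (zs k) < ereal (- real k)"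
    by metis
  have "bounded (range zs)" using zs(1) by (intro bounded_subset[OF bounded_cball]) auto
  then obtain l r where r: "strict_mono r" "(zs \<circ> r) \<longlonglongrightarrow> l"
    using bounded_imp_convergent_subsequence by blast
  have le: "f l \<le> ereal (- real M)" for M :: nat
  proof (rule epi_lim[OF cl])
    show "((\<lambda>k. ((zs \<circ> r) k, - real M)) \<longlongrightarrow> (l, - real M)) sequentially"
      by (intro tendsto_Pair r(2) tendsto_const)
    show "eventually (\<lambda>k. f ((zs \<circ> r) k) \<le> ereal (- real M)) sequentially"
      using eventually_ge_at_top[of M]
    proof eventually_elim
      case (elim k)
      have "k \<le> r k" using seq_suble[OF r(1)] by blast
      have "f (zs (r k)) < ereal (- real (r k))" using zs(2) by blast
      also have "\<dots> \<le> ereal (- real M)" using elim \<open>k \<le> r k\<close> by simp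
      finally show ?case by simp
    qed
  qed
  have "f l = -\<infinity>"
  proof (cases "f l")
    case (real a)
    have "f l \<le> ereal (- real (nat (ceiling (- a)) + 1))" by (rule le)
    then have "a \<le> - real (nat (ceiling (- a)) + 1)" using real by simp
    moreover have "real (nat (ceiling (- a))) \<ge> - a" by linarith
    ultimately show ?thesis by linarith
  next
    case PInf
    then show ?thesis using le[of 0] by simp
  qed
  then show False using pr unfolding proper_fun_def by auto
qed

lemma linear_lower:
  fixes f :: "'a::euclidean_space \<Rightarrow> ereal"
  assumes pr: "proper_fun f" and cl: "closed_fun f" and cv: "convex_fun f"
    and fx0: "f x0 = ereal a0"
  shows "\<exists>m K. K \<ge> 0 \<and> (\<forall>z. ereal (m - K * norm (z - x0)) \<le> f z)"
proof -
  obtain m where m: "\<And>z. z \<in> cball x0 1 \<Longrightarrow> ereal m \<le> f z"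
    using ball_lower[OF pr cl] by blast
  have ma: "m \<le> a0" using m[of x0] fx0 by simp
  define K where "K = a0 - m"
  have "ereal (m - K * norm (z - x0)) \<le> f z" for z
  proof (cases "f z")
    case (real fz)
    define r where "r = norm (z - x0)"
    show ?thesis
    proof (cases "r \<le> 1")
      case True
      then have "ereal m \<le> f z" using m by (simp add: r_def dist_norm norm_minus_commute)
      moreover have "K * r \<ge> 0" using ma by (simp add: K_def r_def)
      ultimately show ?thesis using real by (simp add: r_def)
    next
      case False
      define y where "y = (1 - 1/r) *\<^sub>R x0 + (1/r) *\<^sub>R z"
      have "y - x0 = (1/r) *\<^sub>R (z - x0)" by (simp add: y_def algebra_simps)
      then have "norm (y - x0) = 1" using False by (auto simp: r_def)
      then have "ereal m \<le> f y" using m by (simp add: dist_norm norm_minus_commute)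
      also have "f y \<le> ereal ((1 - 1/r) * a0 + (1/r) * fz)"
        unfolding y_def by (rule convex_ineq[OF cv fx0 real]) (use False in auto)
      finally have "m \<le> (1 - 1/r) * a0 + (1/r) * fz" by simp
      then have "r * m \<le> r * ((1 - 1/r) * a0 + (1/r) * fz)" using False by simp
      then have "r * m \<le> (r - 1) * a0 + fz" using False by (simp add: algebra_simps)
      then have "fz \<ge> m - (r - 1) * K" by (simp add: K_def algebra_simps)
      moreover have "(r - 1) * K \<le> r * K" using ma by (simp add: K_def algebra_simps)
      ultimately show ?thesis using real by (simp add: r_def mult.commute)
    qed
  next
    case PInf
    then show ?thesis by simp
  next
    case MInf
    then show ?thesis using pr unfolding proper_fun_def by auto
  qed
  moreover have "K \<ge> 0" using ma by (simp add: K_def)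
  ultimately show ?thesis by blast
qed

lemma quad_lower:
  fixes c K r :: real
  assumes "c > 0"
  shows "c * r\<^sup>2 - K * r \<ge> - (K\<^sup>2 / (4 * c))"
proof -
  have "c * r\<^sup>2 - K * r + K\<^sup>2 / (4 * c) = (2 * c * r - K)\<^sup>2 / (4 * c)"
    using assms by (simp add: field_simps power2_eq_square)
  moreover have "(2 * c * r - K)\<^sup>2 / (4 * c) \<ge> 0" using assms by simp
  ultimately show ?thesis by linarith
qed

lemma quad_bound:
  fixes c K r P :: real
  assumes "c > 0" "r \<ge> 0" "c * r\<^sup>2 - K * r \<le> P" "K \<ge> 0"
  shows "r \<le> max 1 ((\<bar>P\<bar> + K) / c)"
proof (cases "r \<le> 1")
  case False
  have "\<bar>P\<bar> \<le> \<bar>P\<bar> * r" using False by (simp add: mult_le_cancel_left1)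
  then have "(c * r) * r \<le> (\<bar>P\<bar> + K) * r"
    using assms(3) by (simp add: power2_eq_square algebra_simps)
  then have "c * r \<le> \<bar>P\<bar> + K" using False by simp
  then have "r \<le> (\<bar>P\<bar> + K) / c" using assms(1) by (simp add: field_simps mult.commute)
  then show ?thesis by simp
qed simp

lemma prox_exists:
  fixes f :: "'a::euclidean_space \<Rightarrow> ereal"
  assumes pr: "proper_fun f" and cl: "closed_fun f" and cv: "convex_fun f" and c: "c > 0"
  shows "\<exists>x. \<forall>z. f x + ereal (c * (norm (x - u))\<^sup>2) \<le> f z + ereal (c * (norm (z - u))\<^sup>2)"
proof -
  define h where "h z = f z + ereal (c * (norm (z - u))\<^sup>2)" for z
  obtain x0 where x0: "f x0 \<noteq> \<infinity>" using pr unfolding proper_fun_def by auto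
  obtain a0 where fx0: "f x0 = ereal a0" using x0 pr unfolding proper_fun_def by (cases "f x0") auto
  obtain m K where K: "K \<ge> 0" and mK: "\<And>z. ereal (m - K * norm (z - x0)) \<le> f z"
    using linear_lower[OF pr cl cv fx0] by blast
  define d where "d = norm (x0 - u)"
  define L where "L = m - K * d - K\<^sup>2 / (4 * c)"
  have hlow: "ereal (m - K * norm (z - x0) + c * (norm (z - u))\<^sup>2) \<le> h z" for z
  proof -
    have "ereal (m - K * norm (z - x0)) + ereal (c * (norm (z - u))\<^sup>2) \<le> h z"
      unfolding h_def by (rule add_right_mono[OF mK])
    then show ?thesis by simp
  qed
  have nz: "norm (z - x0) \<le> norm (z - u) + d" for z
    by (rule norm_diff_triangle_le[OF order_refl]) (simp add: d_def norm_minus_commute)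
  have lowr: "m - K * norm (z - x0) + c * (norm (z - u))\<^sup>2 \<ge> m - K * d + (c * (norm (z - u))\<^sup>2 - K * norm (z - u))" for z
  proof -
    have "K * norm (z - x0) \<le> K * (norm (z - u) + d)" by (rule mult_left_mono[OF nz K])
    then show ?thesis by (simp add: algebra_simps)
  qed
  have hL: "ereal L \<le> h z" for z
  proof -
    have "L \<le> m - K * norm (z - x0) + c * (norm (z - u))\<^sup>2"
      using lowr[of z] quad_lower[OF c, where r="norm (z - u)" and K=K] unfolding L_def by linarith
    then show ?thesis using hlow[of z] by (meson ereal_less_eq(3) order_trans)
  qed
  define I where "I = (INF z. h z)"
  have IL: "ereal L \<le> I" unfolding I_def by (rule INF_greatest) (rule hL)
  have Ih: "I \<le> h z" for z unfolding I_def by (rule INF_lower) simp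
  have "I \<le> ereal (a0 + c * (norm (x0 - u))\<^sup>2)" using Ih[of x0] by (simp add: h_def fx0)
  then obtain i where i: "I = ereal i" using IL by (cases I) auto
  have "\<forall>k. \<exists>z. h z < ereal (i + inverse (real (Suc k)))"
  proof
    fix k
    have "I < ereal (i + inverse (real (Suc k)))" using i by simp
    then show "\<exists>z. h z < ereal (i + inverse (real (Suc k)))"
      unfolding I_def by (simp add: INF_less_iff)
  qed
  then obtain zs where zs: "\<And>k. h (zs k) < ereal (i + inverse (real (Suc k)))" by metis
  define P where "P = i + 1 - m + K * d"
  have bnd: "norm (zs k - u) \<le> max 1 ((\<bar>P\<bar> + K) / c)" for k
  proof (rule quad_bound[OF c _ _ K])
    have "inverse (real (Suc k)) \<le> 1" by (simp add: inverse_le_1_iff)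
    then have "h (zs k) \<le> ereal (i + 1)" using zs[of k] by (meson ereal_less_eq(3) add_left_mono less_imp_le order_trans)
    then have "m - K * norm (zs k - x0) + c * (norm (zs k - u))\<^sup>2 \<le> i + 1"
      using hlow[of "zs k"] by (meson ereal_less_eq(3) order_trans)
    then show "c * (norm (zs k - u))\<^sup>2 - K * norm (zs k - u) \<le> P"
      using lowr[of "zs k"] unfolding P_def by linarith
  qed simp
  have "bounded (range zs)"
    by (rule bounded_subset[OF bounded_cball[of u "max 1 ((\<bar>P\<bar> + K) / c)"]])
       (use bnd in \<open>auto simp: dist_norm norm_minus_commute\<close>)
  then obtain x s where s: "strict_mono s" "(zs \<circ> s) \<longlonglongrightarrow> x"
    using bounded_imp_convergent_subsequence by blast
  have fz: "f (zs k) \<le> ereal (i + inverse (real (Suc k)) - c * (norm (zs k - u))\<^sup>2)" for k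
  proof (cases "f (zs k)")
    case (real b)
    then show ?thesis using zs[of k] by (simp add: h_def)
  next
    case PInf
    then show ?thesis using zs[of k] by (simp add: h_def)
  next
    case MInf
    then show ?thesis using pr unfolding proper_fun_def by auto
  qed
  have "f x \<le> ereal (i + 0 - c * (norm (x - u))\<^sup>2)"
  proof (rule epi_lim[OF cl])
    have inv: "((\<lambda>n. inverse (real (Suc n))) \<circ> s) \<longlonglongrightarrow> 0"
      by (rule LIMSEQ_subseq_LIMSEQ[OF LIMSEQ_inverse_real_of_nat s(1)])
    have "(\<lambda>k. i + inverse (real (Suc (s k))) - c * (norm ((zs \<circ> s) k - u))\<^sup>2) \<longlonglongrightarrow> i + 0 - c * (norm (x - u))\<^sup>2"
      by (intro tendsto_diff tendsto_add tendsto_const tendsto_mult tendsto_power tendsto_norm s(2) inv[unfolded comp_def])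
    then show "((\<lambda>k. ((zs \<circ> s) k, i + inverse (real (Suc (s k))) - c * (norm ((zs \<circ> s) k - u))\<^sup>2)) \<longlongrightarrow> (x, i + 0 - c * (norm (x - u))\<^sup>2)) sequentially"
      by (intro tendsto_Pair s(2))
    show "eventually (\<lambda>k. f ((zs \<circ> s) k) \<le> ereal (i + inverse (real (Suc (s k))) - c * (norm ((zs \<circ> s) k - u))\<^sup>2)) sequentially"
      using fz by simp
  qed
  then have "h x \<le> ereal i"
    unfolding h_def using add_right_mono[of "f x" _ "ereal (c * (norm (x - u))\<^sup>2)"] by fastforce
  then have "\<forall>z. h x \<le> h z" using Ih i by (metis order_trans)
  then show ?thesis unfolding h_def by blast
qed

lemma norm_sq_add_scale:
  fixes a b :: "'a::real_inner"
  shows "(norm (a + t *\<^sub>R b))\<^sup>2 = (norm a)\<^sup>2 + 2 * t * inner a b + t\<^sup>2 * (norm b)\<^sup>2"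
proof -
  have "inner (a + t *\<^sub>R b) (a + t *\<^sub>R b) = inner a a + 2 * t * inner a b + t\<^sup>2 * inner b b"
    by (simp add: inner_add_left inner_add_right inner_commute power2_eq_square algebra_simps)
  then show ?thesis by (simp only: power2_norm_eq_inner)
qed

lemma small_t:
  fixes A B :: real
  assumes B: "B \<ge> 0" and h: "\<And>t. 0 < t \<Longrightarrow> t \<le> 1 \<Longrightarrow> 0 \<le> A + t * B"
  shows "A \<ge> 0"
proof (rule ccontr)
  assume "\<not> A \<ge> 0"
  then have A: "A < 0" by simp
  define t where "t = min 1 (- A / (2 * (B + 1)))"
  have "- A / (2 * (B + 1)) > 0" using A B by (intro divide_pos_pos) auto
  then have t0: "0 < t" by (simp add: t_def)
  have t1: "t \<le> 1" by (simp add: t_def)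
  have "t \<le> - A / (2 * (B + 1))" by (simp add: t_def)
  then have "t * (2 * (B + 1)) \<le> - A" using B by (simp add: field_simps)
  then have "2 * (t * B) + 2 * t \<le> - A" by (simp add: algebra_simps)
  then have "t * B < - A" using t0 A by linarith
  then show False using h[OF t0 t1] by linarith
qed

lemma prox_opt:
  fixes f :: "'a::real_inner \<Rightarrow> ereal"
  assumes pr: "proper_fun f" and cv: "convex_fun f" and c: "c > 0"
    and mn: "\<And>z. f x + ereal (c * (norm (x - u))\<^sup>2) \<le> f z + ereal (c * (norm (z - u))\<^sup>2)"
  shows "(2 * c) *\<^sub>R (u - x) \<in> subdiff f x"
proof -
  obtain z0 where z0: "f z0 \<noteq> \<infinity>" using pr unfolding proper_fun_def by auto
  obtain b0 where b0: "f z0 = ereal b0" using z0 pr unfolding proper_fun_def by (cases "f z0") auto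
  have "f x \<noteq> \<infinity>" using mn[of z0] b0 by auto
  then obtain a where a: "f x = ereal a" using pr unfolding proper_fun_def by (cases "f x") auto
  have main: "f z \<ge> ereal a + ereal (inner ((2 * c) *\<^sub>R (u - x)) (z - x))" for z
  proof (cases "f z")
    case (real b)
    define A where "A = b - a + 2 * c * inner (x - u) (z - x)"
    define B where "B = c * (norm (z - x))\<^sup>2"
    have "A \<ge> 0"
    proof (rule small_t)
      show "B \<ge> 0" using c by (simp add: B_def)
      fix t :: real assume t: "0 < t" "t \<le> 1"
      define xt where "xt = (1 - t) *\<^sub>R x + t *\<^sub>R z"
      have fxt: "f xt \<le> ereal ((1 - t) * a + t * b)"
        unfolding xt_def by (rule convex_ineq[OF cv a real]) (use t in auto)
      have "ereal a + ereal (c * (norm (x - u))\<^sup>2) \<le> f xt + ereal (c * (norm (xt - u))\<^sup>2)"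
        using mn[of xt] a by simp
      also have "\<dots> \<le> ereal ((1 - t) * a + t * b) + ereal (c * (norm (xt - u))\<^sup>2)"
        by (rule add_right_mono[OF fxt])
      finally have ineq: "a + c * (norm (x - u))\<^sup>2 \<le> (1 - t) * a + t * b + c * (norm (xt - u))\<^sup>2"
        by simp
      have eq: "xt - u = (x - u) + t *\<^sub>R (z - x)" by (simp add: xt_def algebra_simps)
      have "(norm (xt - u))\<^sup>2 = (norm (x - u))\<^sup>2 + 2 * t * inner (x - u) (z - x) + t\<^sup>2 * (norm (z - x))\<^sup>2"
        unfolding eq by (rule norm_sq_add_scale)
      then have hn: "c * (norm (xt - u))\<^sup>2 = c * (norm (x - u))\<^sup>2 + c * (2 * t * inner (x - u) (z - x)) + c * (t\<^sup>2 * (norm (z - x))\<^sup>2)"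
        by (simp add: distrib_left)
      have e1: "(1 - t) * a = a - t * a" by (simp add: algebra_simps)
      have e2: "t * (A + t * B) = t * b - t * a + c * (2 * t * inner (x - u) (z - x)) + c * (t\<^sup>2 * (norm (z - x))\<^sup>2)"
        by (simp add: A_def B_def algebra_simps power2_eq_square)
      have "0 \<le> t * (A + t * B)" using ineq hn e1 e2 by linarith
      then show "0 \<le> A + t * B" using t by (simp add: zero_le_mult_iff)
    qed
    moreover have "inner ((2 * c) *\<^sub>R (u - x)) (z - x) = - (2 * c * inner (x - u) (z - x))"
      by (simp add: inner_diff_left algebra_simps)
    ultimately show ?thesis using real by (simp add: A_def)
  next
    case PInf
    then show ?thesis by simp
  next
    case MInf
    then show ?thesis using pr unfolding proper_fun_def by auto
  qed
  show ?thesis unfolding subdiff_def using a main by simp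
qed

lemma polar:
  fixes x y :: "'a::real_inner"
  shows "2 * inner x y = (norm x)\<^sup>2 + (norm y)\<^sup>2 - (norm (x - y))\<^sup>2"
  using dot_norm_neg[of x y] by simp

lemma fejer:
  fixes X Y V X' Y' V' gF Xs Vs :: "'a::real_inner"
  assumes s1: "gF \<in> subdiff F X'" and s2: "V' \<in> subdiff G Y'" and s3: "V \<in> subdiff G Y"
    and k1: "- Vs \<in> subdiff F Xs" and k2: "Vs \<in> subdiff G Xs"
    and eV: "V' = V + (1/2) *\<^sub>R (X' - Y')"
    and eg: "gF = - V' + (1/2) *\<^sub>R (X - X') + (1/2) *\<^sub>R (Y - Y')"
  shows "2 * (norm (V' - Vs))\<^sup>2 + (1/2) * (norm (X' - Xs))\<^sup>2 + (1/2) * (norm (Y' - Xs))\<^sup>2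
      + (2 * (norm (V' - V))\<^sup>2 + (1/2) * (norm (X' - X))\<^sup>2 + (1/2) * (norm (Y' - Y))\<^sup>2)
      \<le> 2 * (norm (V - Vs))\<^sup>2 + (1/2) * (norm (X - Xs))\<^sup>2 + (1/2) * (norm (Y - Xs))\<^sup>2"
proof -
  define a where "a = V' - Vs"
  define dV where "dV = V' - V"
  define x where "x = X' - Xs"
  define dX where "dX = X' - X"
  define y where "y = Y' - Xs"
  define dY where "dY = Y' - Y"
  have m1: "inner (gF - - Vs) (X' - Xs) \<ge> 0" by (rule subdiff_mono[OF s1 k1])
  have m2: "inner (V' - Vs) (Y' - Xs) \<ge> 0" by (rule subdiff_mono[OF s2 k2])
  have m3: "inner (V' - V) (Y' - Y) \<ge> 0" by (rule subdiff_mono[OF s2 s3])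
  have v1: "gF - - Vs = - a - (1/2) *\<^sub>R dX - (1/2) *\<^sub>R dY"
    unfolding eg a_def dX_def dY_def by (simp add: algebra_simps)
  have v2: "x = 2 *\<^sub>R dV + y"
    unfolding x_def dV_def y_def eV by (simp add: algebra_simps)
  have h1: "inner (gF - - Vs) (X' - Xs) = - inner a x - (1/2) * inner dX x - (1/2) * inner dY x"
    unfolding v1 x_def[symmetric] by (simp add: inner_diff_left)
  have h2: "inner a x = 2 * inner a dV + inner a y" unfolding v2 by (simp add: inner_add_right)
  have h3: "inner dY x = 2 * inner dY dV + inner dY y" unfolding v2 by (simp add: inner_add_right)
  have h4: "inner dY dV = inner dV dY" by (rule inner_commute)
  have m2': "inner a y \<ge> 0" using m2 by (simp add: a_def y_def)
  have m3': "inner dV dY \<ge> 0" using m3 by (simp add: dV_def dY_def)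
  have p1: "2 * inner a dV = (norm a)\<^sup>2 + (norm dV)\<^sup>2 - (norm (V - Vs))\<^sup>2"
    using polar[of a dV] by (simp add: a_def dV_def)
  have p2: "2 * inner dX x = (norm dX)\<^sup>2 + (norm x)\<^sup>2 - (norm (X - Xs))\<^sup>2"
    using polar[of dX x] norm_minus_commute[of Xs X] by (simp add: dX_def x_def)
  have p3: "2 * inner dY y = (norm dY)\<^sup>2 + (norm y)\<^sup>2 - (norm (Y - Xs))\<^sup>2"
    using polar[of dY y] norm_minus_commute[of Xs Y] by (simp add: dY_def y_def)
  have i2: "inner dX x = inner x dX" "inner dY y = inner y dY" by (simp_all add: inner_commute)
  have "2 * inner a dV + (1/2) * inner dX x + (1/2) * inner dY y \<le> 0"
    using m1 h1 h2 h3 h4 m2' m3' by linarith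
  then show ?thesis using p1 p2 p3
    unfolding a_def[symmetric] dV_def[symmetric] x_def[symmetric] dX_def[symmetric] y_def[symmetric] dY_def[symmetric]
    by linarith
qed

definition phi :: "(nat \<Rightarrow> 'a::real_inner) \<Rightarrow> (nat \<Rightarrow> 'a) \<Rightarrow> (nat \<Rightarrow> 'a) \<Rightarrow> 'a \<Rightarrow> 'a \<Rightarrow> nat \<Rightarrow> real" where
  "phi X Y V Xs Vs k = 2 * (norm (V k - Vs))\<^sup>2 + (1/2) * (norm (X k - Xs))\<^sup>2 + (1/2) * (norm (Y k - Xs))\<^sup>2"

definition dd :: "(nat \<Rightarrow> 'a::real_inner) \<Rightarrow> (nat \<Rightarrow> 'a) \<Rightarrow> (nat \<Rightarrow> 'a) \<Rightarrow> nat \<Rightarrow> real" where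
  "dd X Y V k = 2 * (norm (V (Suc k) - V k))\<^sup>2 + (1/2) * (norm (X (Suc k) - X k))\<^sup>2 + (1/2) * (norm (Y (Suc k) - Y k))\<^sup>2"

lemma phi_nonneg: "phi X Y V Xs Vs k \<ge> 0" unfolding phi_def by simp

lemma dd_nonneg: "dd X Y V k \<ge> 0" unfolding dd_def by simp

lemma fejer_seq:
  fixes X Y V :: "nat \<Rightarrow> 'a::real_inner"
  assumes A: "\<And>k. - V (Suc k) + (1/2) *\<^sub>R (X k - X (Suc k)) + (1/2) *\<^sub>R (Y k - Y (Suc k)) \<in> subdiff F (X (Suc k))"
    and B: "\<And>k. V (Suc k) \<in> subdiff G (Y (Suc k))"
    and C: "\<And>k. V (Suc k) = V k + (1/2) *\<^sub>R (X (Suc k) - Y (Suc k))"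
    and k1: "- Vs \<in> subdiff F Xs" and k2: "Vs \<in> subdiff G Xs"
  shows "phi X Y V Xs Vs (Suc (Suc j)) + dd X Y V (Suc j) \<le> phi X Y V Xs Vs (Suc j)"
  unfolding phi_def dd_def
  by (rule fejer[OF A[of "Suc j"] B[of "Suc j"] B[of j] k1 k2 C refl])

lemma sq_to_zero:
  fixes f :: "nat \<Rightarrow> 'a::real_normed_vector"
  assumes "(\<lambda>k. (norm (f k))\<^sup>2) \<longlonglongrightarrow> 0"
  shows "f \<longlonglongrightarrow> 0"
proof -
  have "(\<lambda>k. sqrt ((norm (f k))\<^sup>2)) \<longlonglongrightarrow> sqrt 0" by (rule tendsto_real_sqrt[OF assms])
  then have "(\<lambda>k. norm (f k)) \<longlonglongrightarrow> 0" by simp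
  then show ?thesis by (simp add: tendsto_norm_zero_iff)
qed

lemma squeeze0:
  fixes a b :: "nat \<Rightarrow> real"
  assumes "\<And>k. 0 \<le> a k" "\<And>k. a k \<le> b k" "b \<longlonglongrightarrow> 0"
  shows "a \<longlonglongrightarrow> 0"
  by (rule tendsto_sandwich[of "\<lambda>_. 0" a sequentially b]) (use assms in auto)

lemma diff_to_zero:
  fixes f :: "nat \<Rightarrow> 'a::real_normed_vector"
  assumes "\<And>k. c * (norm (f k))\<^sup>2 \<le> b k" "c > 0" "b \<longlonglongrightarrow> 0"
  shows "f \<longlonglongrightarrow> 0"
proof (rule sq_to_zero, rule squeeze0)
  show "(\<lambda>k. b k / c) \<longlonglongrightarrow> 0" using tendsto_divide[OF assms(3) tendsto_const[of c]] assms(2) by simp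
  show "(norm (f k))\<^sup>2 \<le> b k / c" for k using assms(1)[of k] assms(2) by (simp add: field_simps mult.commute)
qed simp

lemma phi_lim:
  fixes X Y V :: "nat \<Rightarrow> 'a::real_inner"
  assumes A: "\<And>k. - V (Suc k) + (1/2) *\<^sub>R (X k - X (Suc k)) + (1/2) *\<^sub>R (Y k - Y (Suc k)) \<in> subdiff F (X (Suc k))"
    and B: "\<And>k. V (Suc k) \<in> subdiff G (Y (Suc k))"
    and C: "\<And>k. V (Suc k) = V k + (1/2) *\<^sub>R (X (Suc k) - Y (Suc k))"
    and k1: "- Vs \<in> subdiff F Xs" and k2: "Vs \<in> subdiff G Xs"
  obtains L where "(\<lambda>j. phi X Y V Xs Vs (Suc j)) \<longlonglongrightarrow> L"
    "(\<lambda>j. dd X Y V (Suc j)) \<longlonglongrightarrow> 0"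
    "\<And>j. phi X Y V Xs Vs (Suc j) \<le> phi X Y V Xs Vs (Suc 0)"
proof -
  let ?P = "\<lambda>j. phi X Y V Xs Vs (Suc j)"
  have fj: "?P (Suc j) + dd X Y V (Suc j) \<le> ?P j" for j
    using fejer_seq[where X=X and Y=Y and V=V and F=F and G=G and j=j, OF A B C k1 k2] by simp
  have dec: "decseq ?P"
    by (rule decseq_SucI) (use fj dd_nonneg in \<open>smt (verit)\<close>)
  obtain L where L: "?P \<longlonglongrightarrow> L" "\<forall>i. L \<le> ?P i"
    using decseq_convergent[OF dec, of 0] phi_nonneg by blast
  have "(\<lambda>j. ?P j - ?P (Suc j)) \<longlonglongrightarrow> L - L"
    by (intro tendsto_diff L(1)) (rule LIMSEQ_Suc[OF L(1)])
  then have "(\<lambda>j. dd X Y V (Suc j)) \<longlonglongrightarrow> 0"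
    by (intro squeeze0[OF dd_nonneg]) (use fj in \<open>auto simp: algebra_simps\<close>)
  moreover have "?P j \<le> ?P 0" for j using dec by (simp add: decseq_def)
  ultimately show ?thesis using that L(1) by blast
qed

lemma conv:
  fixes X Y V :: "nat \<Rightarrow> 'a::euclidean_space"
  assumes prF: "proper_fun F" and clF: "closed_fun F" and prG: "proper_fun G" and clG: "closed_fun G"
    and A: "\<And>k. - V (Suc k) + (1/2) *\<^sub>R (X k - X (Suc k)) + (1/2) *\<^sub>R (Y k - Y (Suc k)) \<in> subdiff F (X (Suc k))"
    and B: "\<And>k. V (Suc k) \<in> subdiff G (Y (Suc k))"
    and C: "\<And>k. V (Suc k) = V k + (1/2) *\<^sub>R (X (Suc k) - Y (Suc k))"
    and k1: "- Vs \<in> subdiff F Xs" and k2: "Vs \<in> subdiff G Xs"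
  shows "\<exists>Xb Vb. - Vb \<in> subdiff F Xb \<and> Vb \<in> subdiff G Xb \<and> X \<longlonglongrightarrow> Xb \<and> Y \<longlonglongrightarrow> Xb \<and> V \<longlonglongrightarrow> Vb"
proof -
  obtain L where L: "(\<lambda>j. phi X Y V Xs Vs (Suc j)) \<longlonglongrightarrow> L"
    and D: "(\<lambda>j. dd X Y V (Suc j)) \<longlonglongrightarrow> 0"
    and Pb: "\<And>j. phi X Y V Xs Vs (Suc j) \<le> phi X Y V Xs Vs (Suc 0)"
    using phi_lim[where X=X and Y=Y and V=V and F=F and G=G, OF A B C k1 k2] by blast
  define M where "M = phi X Y V Xs Vs (Suc 0)"
  have dX: "(\<lambda>j. X (Suc (Suc j)) - X (Suc j)) \<longlonglongrightarrow> 0"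
    by (rule diff_to_zero[OF _ _ D, of "1/2"]) (auto simp: dd_def)
  have dY: "(\<lambda>j. Y (Suc (Suc j)) - Y (Suc j)) \<longlonglongrightarrow> 0"
    by (rule diff_to_zero[OF _ _ D, of "1/2"]) (auto simp: dd_def)
  have dV: "(\<lambda>j. V (Suc (Suc j)) - V (Suc j)) \<longlonglongrightarrow> 0"
    by (rule diff_to_zero[OF _ _ D, of "2"]) (auto simp: dd_def)
  have bnd: "norm (Z (Suc (Suc j))) \<le> norm W + sqrt (c * M)"
    if h: "\<And>j. (norm (Z (Suc j) - W))\<^sup>2 \<le> c * phi X Y V Xs Vs (Suc j)" "c > 0"
    for Z :: "nat \<Rightarrow> 'a" and W c j
  proof -
    have "(norm (Z (Suc (Suc j)) - W))\<^sup>2 \<le> c * M"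
      using h(1)[of "Suc j"] Pb[of "Suc j"] h(2) unfolding M_def by (smt (verit) mult_left_mono)
    then have "norm (Z (Suc (Suc j)) - W) \<le> sqrt (c * M)" by (rule real_le_rsqrt)
    moreover have "norm (Z (Suc (Suc j))) \<le> norm W + norm (Z (Suc (Suc j)) - W)"
      by (metis add.commute diff_add_cancel norm_triangle_ineq)
    ultimately show ?thesis by linarith
  qed
  have bX: "bounded (range (\<lambda>j. X (Suc (Suc j))))"
    unfolding bounded_iff using bnd[of X Xs 2] by (auto simp: phi_def)
  have bY: "bounded (range (\<lambda>j. Y (Suc (Suc j))))"
    unfolding bounded_iff using bnd[of Y Xs 2] by (auto simp: phi_def)
  have bV: "bounded (range (\<lambda>j. V (Suc (Suc j))))"
    unfolding bounded_iff using bnd[of V Vs "1/2"] by (auto simp: phi_def)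
  define W where "W j = (X (Suc (Suc j)), Y (Suc (Suc j)), V (Suc (Suc j)))" for j
  have "bounded (range W)"
    by (rule bounded_subset[OF bounded_Times[OF bX bounded_Times[OF bY bV]]]) (auto simp: W_def)
  then obtain l r where r: "strict_mono r" "(W \<circ> r) \<longlonglongrightarrow> l"
    using bounded_imp_convergent_subsequence by blast
  obtain Xb Yb Vb where l: "l = (Xb, Yb, Vb)" by (cases l) auto
  have cX: "(\<lambda>j. X (Suc (Suc (r j)))) \<longlonglongrightarrow> Xb"
    using tendsto_fst[OF r(2)] by (simp add: l W_def comp_def)
  have cY: "(\<lambda>j. Y (Suc (Suc (r j)))) \<longlonglongrightarrow> Yb"
    using tendsto_fst[OF tendsto_snd[OF r(2)]] by (simp add: l W_def comp_def)
  have cV: "(\<lambda>j. V (Suc (Suc (r j)))) \<longlonglongrightarrow> Vb"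
    using tendsto_snd[OF tendsto_snd[OF r(2)]] by (simp add: l W_def comp_def)
  have sX: "(\<lambda>j. X (Suc (Suc (r j))) - X (Suc (r j))) \<longlonglongrightarrow> 0"
    using LIMSEQ_subseq_LIMSEQ[OF dX r(1)] by (simp add: comp_def)
  have sY: "(\<lambda>j. Y (Suc (Suc (r j))) - Y (Suc (r j))) \<longlonglongrightarrow> 0"
    using LIMSEQ_subseq_LIMSEQ[OF dY r(1)] by (simp add: comp_def)
  have sV: "(\<lambda>j. V (Suc (Suc (r j))) - V (Suc (r j))) \<longlonglongrightarrow> 0"
    using LIMSEQ_subseq_LIMSEQ[OF dV r(1)] by (simp add: comp_def)
  have "(\<lambda>j. X (Suc (Suc (r j))) - Y (Suc (Suc (r j)))) \<longlonglongrightarrow> Xb - Yb"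
    by (intro tendsto_diff cX cY)
  moreover have "(\<lambda>j. X (Suc (Suc (r j))) - Y (Suc (Suc (r j)))) = (\<lambda>j. 2 *\<^sub>R (V (Suc (Suc (r j))) - V (Suc (r j))))"
  proof
    fix j
    show "X (Suc (Suc (r j))) - Y (Suc (Suc (r j))) = 2 *\<^sub>R (V (Suc (Suc (r j))) - V (Suc (r j)))"
    proof -
      have "V (Suc (Suc (r j))) - V (Suc (r j)) = (1/2) *\<^sub>R (X (Suc (Suc (r j))) - Y (Suc (Suc (r j))))"
        using C[of "Suc (r j)"] by simp
      then have "2 *\<^sub>R (V (Suc (Suc (r j))) - V (Suc (r j))) = X (Suc (Suc (r j))) - Y (Suc (Suc (r j)))"
        by simp
      then show ?thesis by simp
    qed
  qed
  moreover have "(\<lambda>j. 2 *\<^sub>R (V (Suc (Suc (r j))) - V (Suc (r j)))) \<longlonglongrightarrow> 2 *\<^sub>R 0"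
    by (intro tendsto_scaleR tendsto_const sV)
  ultimately have "Xb - Yb = 0" using LIMSEQ_unique by fastforce
  then have XY: "Yb = Xb" by simp
  have KG: "Vb \<in> subdiff G Xb"
    using subdiff_closed[OF prG clG cY cV] B XY by simp
  have "(\<lambda>j. - V (Suc (Suc (r j))) + (1/2) *\<^sub>R (X (Suc (r j)) - X (Suc (Suc (r j)))) + (1/2) *\<^sub>R (Y (Suc (r j)) - Y (Suc (Suc (r j)))))
      \<longlonglongrightarrow> - Vb + (1/2) *\<^sub>R (- 0) + (1/2) *\<^sub>R (- 0)"
  proof -
    have e: "\<And>j. X (Suc (r j)) - X (Suc (Suc (r j))) = - (X (Suc (Suc (r j))) - X (Suc (r j)))"
      "\<And>j. Y (Suc (r j)) - Y (Suc (Suc (r j))) = - (Y (Suc (Suc (r j))) - Y (Suc (r j)))" by simp_all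
    show ?thesis unfolding e
      by (intro tendsto_add tendsto_minus tendsto_scaleR tendsto_const cV sX sY)
  qed
  then have KF: "- Vb \<in> subdiff F Xb"
    using subdiff_closed[OF prF clF cX] A by simp
  obtain Lb where Lb: "(\<lambda>j. phi X Y V Xb Vb (Suc j)) \<longlonglongrightarrow> Lb"
    using phi_lim[where X=X and Y=Y and V=V and F=F and G=G, OF A B C KF KG] by blast
  have "(\<lambda>j. phi X Y V Xb Vb (Suc (Suc (r j)))) \<longlonglongrightarrow> 2 * (norm (Vb - Vb))\<^sup>2 + (1/2) * (norm (Xb - Xb))\<^sup>2 + (1/2) * (norm (Yb - Xb))\<^sup>2"
    unfolding phi_def by (intro tendsto_add tendsto_mult tendsto_const tendsto_power tendsto_norm tendsto_diff cX cY cV)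
  then have z: "(\<lambda>j. phi X Y V Xb Vb (Suc (Suc (r j)))) \<longlonglongrightarrow> 0" using XY by simp
  have "strict_mono (Suc \<circ> r)" using r(1) by (simp add: strict_mono_def)
  from LIMSEQ_subseq_LIMSEQ[OF Lb this]
  have "(\<lambda>j. phi X Y V Xb Vb (Suc (Suc (r j)))) \<longlonglongrightarrow> Lb" by (simp add: comp_def)
  then have "Lb = 0" using z LIMSEQ_unique by blast
  then have P0: "(\<lambda>j. phi X Y V Xb Vb (Suc j)) \<longlonglongrightarrow> 0" using Lb by simp
  have "(\<lambda>j. X (Suc j) - Xb) \<longlonglongrightarrow> 0"
    by (rule diff_to_zero[OF _ _ P0, of "1/2"]) (auto simp: phi_def)
  then have "(\<lambda>j. X (Suc j)) \<longlonglongrightarrow> Xb" by (simp add: LIM_zero_iff)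
  then have fX: "X \<longlonglongrightarrow> Xb" by (rule LIMSEQ_imp_Suc)
  have "(\<lambda>j. Y (Suc j) - Xb) \<longlonglongrightarrow> 0"
    by (rule diff_to_zero[OF _ _ P0, of "1/2"]) (auto simp: phi_def)
  then have "(\<lambda>j. Y (Suc j)) \<longlonglongrightarrow> Xb" by (simp add: LIM_zero_iff)
  then have fY: "Y \<longlonglongrightarrow> Xb" by (rule LIMSEQ_imp_Suc)
  have "(\<lambda>j. V (Suc j) - Vb) \<longlonglongrightarrow> 0"
    by (rule diff_to_zero[OF _ _ P0, of "2"]) (auto simp: phi_def)
  then have "(\<lambda>j. V (Suc j)) \<longlonglongrightarrow> Vb" by (simp add: LIM_zero_iff)
  then have fV: "V \<longlonglongrightarrow> Vb" by (rule LIMSEQ_imp_Suc)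
  show ?thesis using KF KG fX fY fV by blast
qed

definition cm :: "real \<Rightarrow> ('n::finite) mat" where "cm r = (\<chi> i j. r)"

lemma hprod_cm: "cm r \<circ>\<^sub>H X = r *\<^sub>R X"
  unfolding hprod_def cm_def by (simp add: vec_eq_iff)

lemma hinv_cm: "hinv (cm r) = cm (1/r)"
  unfolding hinv_def cm_def by (simp add: vec_eq_iff)

lemma hsqrt_cm: "hsqrt (cm r) = cm (sqrt r)"
  unfolding hsqrt_def cm_def by (simp add: vec_eq_iff)

lemma X_obj_cm:
  "X_obj F (cm 1) (cm 2) (Xk, Yk, Vk) Z = F Z + ereal ((1/2) * (norm (Z - (Xk - Vk - (1/2) *\<^sub>R (Xk - Yk))))\<^sup>2)"
proof -
  have e: "Z - Xk + (Vk + (1/2) *\<^sub>R (Xk - Yk)) = Z - (Xk - Vk - (1/2) *\<^sub>R (Xk - Yk))"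
    by (simp add: algebra_simps)
  show ?thesis unfolding X_obj_def by (simp add: hinv_cm hsqrt_cm hprod_cm e)
qed

lemma Y_obj_cm:
  "Y_obj G (cm 2) Xn Vk Z = G Z + ereal ((1/4) * (norm (Z - (Xn + 2 *\<^sub>R Vk)))\<^sup>2)"
proof -
  have e: "Z - Xn - 2 *\<^sub>R Vk = Z - (Xn + 2 *\<^sub>R Vk)" by (simp add: algebra_simps)
  have n: "(norm ((1 / sqrt 2) *\<^sub>R w))\<^sup>2 = (1/2) * (norm w)\<^sup>2" for w :: "('n::finite) mat"
    by (simp add: power_mult_distrib power_divide)
  show ?thesis unfolding Y_obj_def by (simp add: hinv_cm hsqrt_cm hprod_cm e power_divide)
qed

lemma step_exists:
  fixes F G :: "('n::finite) mat \<Rightarrow> ereal"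
  assumes prF: "proper_fun F" and clF: "closed_fun F" and cvF: "convex_fun F"
    and prG: "proper_fun G" and clG: "closed_fun G" and cvG: "convex_fun G"
  shows "\<exists>w'. LADMM_step F G (cm 1) (cm 2) w w'"
proof -
  obtain Xk Yk Vk where w: "w = (Xk, Yk, Vk)" by (cases w) auto
  obtain Xn where Xn: "\<forall>z. F Xn + ereal ((1/2) * (norm (Xn - (Xk - Vk - (1/2) *\<^sub>R (Xk - Yk))))\<^sup>2)
      \<le> F z + ereal ((1/2) * (norm (z - (Xk - Vk - (1/2) *\<^sub>R (Xk - Yk))))\<^sup>2)"
    using prox_exists[OF prF clF cvF, of "1/2"] by auto
  obtain Yn where Yn: "\<forall>z. G Yn + ereal ((1/4) * (norm (Yn - (Xn + 2 *\<^sub>R Vk)))\<^sup>2)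
      \<le> G z + ereal ((1/4) * (norm (z - (Xn + 2 *\<^sub>R Vk)))\<^sup>2)"
    using prox_exists[OF prG clG cvG, of "1/4"] by auto
  have "LADMM_step F G (cm 1) (cm 2) w (Xn, Yn, Vk + hinv (cm 2) \<circ>\<^sub>H (Xn - Yn))"
    unfolding LADMM_step_def w using Xn Yn by (simp add: X_obj_cm Y_obj_cm)
  then show ?thesis by blast
qed

lemma step_props:
  fixes F G :: "('n::finite) mat \<Rightarrow> ereal"
  assumes prF: "proper_fun F" and cvF: "convex_fun F"
    and prG: "proper_fun G" and cvG: "convex_fun G"
    and st: "LADMM_step F G (cm 1) (cm 2) (X, Y, V) (X', Y', V')"
  shows "- V' + (1/2) *\<^sub>R (X - X') + (1/2) *\<^sub>R (Y - Y') \<in> subdiff F X'"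
    and "V' \<in> subdiff G Y'"
    and "V' = V + (1/2) *\<^sub>R (X' - Y')"
proof -
  have m1: "\<And>z. F X' + ereal ((1/2) * (norm (X' - (X - V - (1/2) *\<^sub>R (X - Y))))\<^sup>2)
      \<le> F z + ereal ((1/2) * (norm (z - (X - V - (1/2) *\<^sub>R (X - Y))))\<^sup>2)"
    using st unfolding LADMM_step_def by (simp add: X_obj_cm)
  have m2: "\<And>z. G Y' + ereal ((1/4) * (norm (Y' - (X' + 2 *\<^sub>R V)))\<^sup>2)
      \<le> G z + ereal ((1/4) * (norm (z - (X' + 2 *\<^sub>R V)))\<^sup>2)"
    using st unfolding LADMM_step_def by (simp add: Y_obj_cm)
  show eV: "V' = V + (1/2) *\<^sub>R (X' - Y')"
    using st unfolding LADMM_step_def by (simp add: hinv_cm hprod_cm)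
  have p1: "(2 * (1/2)) *\<^sub>R ((X - V - (1/2) *\<^sub>R (X - Y)) - X') \<in> subdiff F X'"
    by (rule prox_opt[OF prF cvF _ m1]) simp
  have p2: "(2 * (1/4)) *\<^sub>R ((X' + 2 *\<^sub>R V) - Y') \<in> subdiff G Y'"
    by (rule prox_opt[OF prG cvG _ m2]) simp
  have e1: "(2 * (1/2)) *\<^sub>R ((X - V - (1/2) *\<^sub>R (X - Y)) - X') = - V' + (1/2) *\<^sub>R (X - X') + (1/2) *\<^sub>R (Y - Y')"
    unfolding eV by (simp add: vec_eq_iff algebra_simps)
  have e2: "(2 * (1/4)) *\<^sub>R ((X' + 2 *\<^sub>R V) - Y') = V'"
    unfolding eV by (simp add: vec_eq_iff algebra_simps)
  show "- V' + (1/2) *\<^sub>R (X - X') + (1/2) *\<^sub>R (Y - Y') \<in> subdiff F X'" using p1 e1 by simp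
  show "V' \<in> subdiff G Y'" using p2 e2 by simp
qed

theorem theorem2:
  fixes F G :: "real ^ 'n ^ 'n \<Rightarrow> ereal"
    and w0 :: "(real ^ 'n ^ 'n) \<times> (real ^ 'n ^ 'n) \<times> (real ^ 'n ^ 'n)"
  assumes "proper_fun F" "closed_fun F" "convex_fun F"
    and "proper_fun G" "closed_fun G" "convex_fun G"
    and "KKT_set F G \<noteq> {}"
  shows "\<exists>\<alpha> \<beta>. (\<forall>k. (\<alpha> k, \<beta> k) \<in> param_set) \<and>
           (\<exists>\<omega>. LADMM_seq F G \<alpha> \<beta> w0 \<omega>) \<and>
           (\<forall>\<omega>. LADMM_seq F G \<alpha> \<beta> w0 \<omega> \<longrightarrow> (\<exists>\<omega>s \<in> KKT_set F G. \<omega> \<longlonglongrightarrow> \<omega>s))"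
proof -
  note prF = assms(1) and clF = assms(2) and cvF = assms(3)
    and prG = assms(4) and clG = assms(5) and cvG = assms(6)
  define \<alpha> :: "nat \<Rightarrow> real ^ 'n ^ 'n" where "\<alpha> = (\<lambda>_. cm 1)"
  define \<beta> :: "nat \<Rightarrow> real ^ 'n ^ 'n" where "\<beta> = (\<lambda>_. cm 2)"
  have par: "\<forall>k. (\<alpha> k, \<beta> k) \<in> param_set"
    by (simp add: param_set_def \<alpha>_def \<beta>_def cm_def)
  have "\<forall>w. \<exists>w'. LADMM_step F G (cm 1) (cm 2) w w'"
    using step_exists[OF prF clF cvF prG clG cvG] by blast
  then obtain nxt where nxt: "\<And>w. LADMM_step F G (cm 1) (cm 2) w (nxt w)" by metis
  define \<omega>0 where "\<omega>0 k = (nxt ^^ k) w0" for k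
  have seq: "LADMM_seq F G \<alpha> \<beta> w0 \<omega>0"
    unfolding LADMM_seq_def \<alpha>_def \<beta>_def \<omega>0_def by (simp add: nxt)
  obtain Xs Ys Vs where kkt: "(Xs, Ys, Vs) \<in> KKT_set F G" using assms(7) by auto
  then have k1: "- Vs \<in> subdiff F Xs" and k2: "Vs \<in> subdiff G Xs"
    by (auto simp: KKT_set_def)
  have conv_all: "\<exists>\<omega>s \<in> KKT_set F G. \<omega> \<longlonglongrightarrow> \<omega>s" if h: "LADMM_seq F G \<alpha> \<beta> w0 \<omega>" for \<omega>
  proof -
    have st: "\<And>k. LADMM_step F G (cm 1) (cm 2) (\<omega> k) (\<omega> (Suc k))"
      using h by (simp add: LADMM_seq_def \<alpha>_def \<beta>_def)
    define X where "X k = fst (\<omega> k)" for k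
    define Y where "Y k = fst (snd (\<omega> k))" for k
    define V where "V k = snd (snd (\<omega> k))" for k
    have we: "\<omega> k = (X k, Y k, V k)" for k by (simp add: X_def Y_def V_def)
    have st': "LADMM_step F G (cm 1) (cm 2) (X k, Y k, V k) (X (Suc k), Y (Suc k), V (Suc k))" for k
      using st[of k] unfolding we .
    note sp = step_props[OF prF cvF prG cvG st']
    obtain Xb Vb where KF: "- Vb \<in> subdiff F Xb" and KG: "Vb \<in> subdiff G Xb"
      and fX: "X \<longlonglongrightarrow> Xb" and fY: "Y \<longlonglongrightarrow> Xb" and fV: "V \<longlonglongrightarrow> Vb"
      using conv[where X=X and Y=Y and V=V and F=F and G=G, OF prF clF prG clG sp(1) sp(2) sp(3) k1 k2] by blast
    have "(Xb, Xb, Vb) \<in> KKT_set F G" using KF KG by (simp add: KKT_set_def)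
    moreover have "\<omega> \<longlonglongrightarrow> (Xb, Xb, Vb)"
    proof -
      have "(\<lambda>k. (X k, Y k, V k)) \<longlonglongrightarrow> (Xb, Xb, Vb)"
        by (intro tendsto_Pair fX fY fV)
      then show ?thesis using we by (simp add: we[abs_def] )
    qed
    ultimately show ?thesis by blast
  qed
  show ?thesis using par seq conv_all by blast
qed

end
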